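(* Let $\emptyset\neq H\subset\mathbb R^n$, let $A\colon[0,\infty)\to\mathbb R^{n\times n}$ and $f\colon[0,\infty)\times\mathbb R^n\to\mathbb R^n$ be continuous, and suppose that $x'=A(t)x$ has an exponential contraction or an exponential expansion on $[0,\infty)$ with constants $N,\lambda>0$. Suppose there exist $\delta,L>0$ such that $|f(t,x_1)-f(t,x_2)|\le L|x_1-x_2|$ for all $t\ge0$ and $x_1,x_2\in\mathcal N_\delta(H)$. If $L<\dfrac{\lambda}{N}$, then $x'=A(t)x+f(t,x)$ has the conditional Lipschitz shadowing property in $H$.
   Context: $|\cdot|$ is a fixed norm on $\mathbb R^n$ and also denotes the induced matrix norm. $B_\delta(x)=\{y:|y-x|\le\delta\}$ and $\mathcal N_\delta(H)=\bigcup_{x\in H}B_\delta(x)$. For continuous $g\colon[0,\infty)\times\mathbb R^n\to\mathbb R^n$ and $\tau\in(0,\infty]$, a pseudosolution of $x'=g(t,x)$ on $[0,\tau)$ is a $C^1$ map $y\colon[0,\tau)\to\mathbb R^n$ with $\sigma_y:=\sup_{0\le t<\tau}|y'(t)-g(t,y(t))|<\infty$. The equation has the conditional Lipschitz shadowing property in $H\neq\emptyset$ if there exist $\varepsilon_0,\kappa>0$ such that whenever $0<\varepsilon\le\varepsilon_0$ and $y$ is a pseudosolution on $[0,\tau)$ ($\tau\in(0,\infty]$) with $\sigma_y\le\varepsilon$ and $y(t)\in H$ for all $t\in[0,\tau)$, there is a solution $x$ on $[0,\tau)$ with $\sup_{0\le t<\tau}|x(t)-y(t)|\le\kappa\varepsilon$.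 With $T(t,s)$ the transition matrix of $x'=A(t)x$: an exponential dichotomy on $[0,\infty)$ consists of projections $P(t)$ and constants $N,\lambda>0$ with $P(t)T(t,s)=T(t,s)P(s)$, $|T(t,s)P(s)|\le Ne^{-\lambda(t-s)}$ for $t\ge s\ge0$, and $|T(t,s)(I-P(s))|\le Ne^{-\lambda(s-t)}$ for $0\le t\le s$. It is an exponential contraction if moreover $P(t)=I$ for all $t$, and an exponential expansion if $P(t)=0$ for all $t$. *)

theory Defs
  imports "HOL-Analysis.Analysis"
begin

definition is_norm :: "(real^'n \<Rightarrow> real) \<Rightarrow> bool" where
  "is_norm nrm \<longleftrightarrow>
     (\<forall>x. 0 \<le> nrm x) \<and> (\<forall>x. nrm x = 0 \<longleftrightarrow> x = 0) \<and>
     (\<forall>c x. nrm (c *\<^sub>R x) = \<bar>c\<bar> * nrm x) \<and>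
     (\<forall>x y. nrm (x + y) \<le> nrm x + nrm y)"

definition mnorm :: "(real^'n \<Rightarrow> real) \<Rightarrow> real^'n^'n \<Rightarrow> real" where
  "mnorm nrm M = (SUP x\<in>{x. nrm x = 1}. nrm (M *v x))"

definition nbhd :: "(real^'n \<Rightarrow> real) \<Rightarrow> real \<Rightarrow> (real^'n) set \<Rightarrow> (real^'n) set" where
  "nbhd nrm \<delta> H = {y. \<exists>x\<in>H. nrm (y - x) \<le> \<delta>}"

definition is_transition_matrix ::
  "(real \<Rightarrow> real^'n^'n) \<Rightarrow> (real \<Rightarrow> real \<Rightarrow> real^'n^'n) \<Rightarrow> bool" where
  "is_transition_matrix A T \<longleftrightarrow>
     (\<forall>s\<ge>0. T s s = mat 1 \<and>
        (\<forall>t\<ge>0. ((\<lambda>r. T r s) has_vector_derivative (A t ** T t s)) (at t within {0..})))"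

definition exp_dichotomy ::
  "(real^'n \<Rightarrow> real) \<Rightarrow> (real \<Rightarrow> real \<Rightarrow> real^'n^'n) \<Rightarrow> (real \<Rightarrow> real^'n^'n)
    \<Rightarrow> real \<Rightarrow> real \<Rightarrow> bool" where
  "exp_dichotomy nrm T P N lam \<longleftrightarrow> N > 0 \<and> lam > 0 \<and>
     (\<forall>t\<ge>0. P t ** P t = P t) \<and>
     (\<forall>t\<ge>0. \<forall>s\<ge>0. P t ** T t s = T t s ** P s) \<and>
     (\<forall>t s. 0 \<le> s \<and> s \<le> t \<longrightarrow> mnorm nrm (T t s ** P s) \<le> N * exp (- lam * (t - s))) \<and>
     (\<forall>t s. 0 \<le> t \<and> t \<le> s \<longrightarrow> mnorm nrm (T t s ** (mat 1 - P s)) \<le> N * exp (- lam * (s - t)))"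

definition exp_contraction where
  "exp_contraction nrm T N lam \<longleftrightarrow> exp_dichotomy nrm T (\<lambda>_. mat 1) N lam"

definition exp_expansion where
  "exp_expansion nrm T N lam \<longleftrightarrow> exp_dichotomy nrm T (\<lambda>_. 0) N lam"

definition ival :: "ereal \<Rightarrow> real set" where
  "ival \<tau> = {t. 0 \<le> t \<and> ereal t < \<tau>}"

text \<open>y is a C^1 pseudosolution of x' = g(t,x) on [0,\<tau>) with derivative y' and
  \<sigma>_y \<le> \<epsilon> (the supremum bound written pointwise).\<close>
definition pseudosol_le ::
  "(real^'n \<Rightarrow> real) \<Rightarrow> (real \<Rightarrow> real^'n \<Rightarrow> real^'n) \<Rightarrow> ereal \<Rightarrow> real
    \<Rightarrow> (real \<Rightarrow> real^'n) \<Rightarrow> bool" where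
  "pseudosol_le nrm g \<tau> \<epsilon> y \<longleftrightarrow>
     (\<exists>y'. continuous_on (ival \<tau>) y' \<and>
        (\<forall>t\<in>ival \<tau>. (y has_vector_derivative y' t) (at t within ival \<tau>)) \<and>
        (\<forall>t\<in>ival \<tau>. nrm (y' t - g t (y t)) \<le> \<epsilon>))"

definition is_solution ::
  "(real \<Rightarrow> real^'n \<Rightarrow> real^'n) \<Rightarrow> ereal \<Rightarrow> (real \<Rightarrow> real^'n) \<Rightarrow> bool" where
  "is_solution g \<tau> x \<longleftrightarrow>
     (\<forall>t\<in>ival \<tau>. (x has_vector_derivative g t (x t)) (at t within ival \<tau>))"

definition cond_lip_shadowing ::
  "(real^'n \<Rightarrow> real) \<Rightarrow> (real \<Rightarrow> real^'n \<Rightarrow> real^'n) \<Rightarrow> (real^'n) set \<Rightarrow> bool" where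
  "cond_lip_shadowing nrm g H \<longleftrightarrow>
     (\<exists>\<epsilon>0 \<kappa>. \<epsilon>0 > 0 \<and> \<kappa> > 0 \<and>
        (\<forall>\<epsilon> \<tau> y. 0 < \<epsilon> \<and> \<epsilon> \<le> \<epsilon>0 \<and> \<tau> > 0 \<and> pseudosol_le nrm g \<tau> \<epsilon> y \<and>
            (\<forall>t\<in>ival \<tau>. y t \<in> H) \<longrightarrow>
          (\<exists>x. is_solution g \<tau> x \<and> (\<forall>t\<in>ival \<tau>. nrm (x t - y t) \<le> \<kappa> * \<epsilon>))))"

end

theory Submission
  imports Defs
begin
lemma bilinear_mmul: "bilinear ((**) :: real^'n^'n \<Rightarrow> real^'n^'n \<Rightarrow> real^'n^'n)"
  unfolding bilinear_def
  by (auto intro!: linearI simp: vec_eq_iff matrix_matrix_mult_def sum.distrib algebra_simps sum_distrib_left)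

lemma bilinear_mvmul: "bilinear ((*v) :: real^'n^'n \<Rightarrow> real^'n \<Rightarrow> real^'n)"
  unfolding bilinear_def
  by (auto intro!: linearI simp: vec_eq_iff matrix_vector_mult_def sum.distrib algebra_simps sum_distrib_left)

lemma bb_mmul: "bounded_bilinear ((**) :: real^'n^'n \<Rightarrow> real^'n^'n \<Rightarrow> real^'n^'n)"
  using bilinear_mmul bilinear_conv_bounded_bilinear by blast
lemma bb_mvmul: "bounded_bilinear ((*v) :: real^'n^'n \<Rightarrow> real^'n \<Rightarrow> real^'n)"
  using bilinear_mvmul bilinear_conv_bounded_bilinear by blast

context fixes nrm :: "real^'n \<Rightarrow> real" assumes nrm: "is_norm nrm"
begin

lemma nrm_nonneg: "0 \<le> nrm x" using nrm unfolding is_norm_def by blast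
lemma nrm_eq0: "nrm x = 0 \<longleftrightarrow> x = 0" using nrm unfolding is_norm_def by blast
lemma nrm_zero[simp]: "nrm 0 = 0" using nrm_eq0 by blast
lemma nrm_scale: "nrm (c *\<^sub>R x) = \<bar>c\<bar> * nrm x" using nrm unfolding is_norm_def by blast
lemma nrm_tri: "nrm (x + y) \<le> nrm x + nrm y" using nrm unfolding is_norm_def by blast
lemma nrm_minus: "nrm (- x) = nrm x"
  using nrm_scale[of "-1" x] by simp
lemma nrm_commute: "nrm (x - y) = nrm (y - x)"
  using nrm_minus[of "x - y"] by simp
lemma nrm_tri_diff: "nrm (x - z) \<le> nrm (x - y) + nrm (y - z)"
  using nrm_tri[of "x - y" "y - z"] by simp
lemma nrm_diff_le: "nrm x - nrm y \<le> nrm (x - y)"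
  using nrm_tri[of "x - y" y] by simp
lemma nrm_sum: "nrm (sum f S) \<le> (\<Sum>i\<in>S. nrm (f i))"
proof (induction S rule: infinite_finite_induct)
  case (insert x F)
  then show ?case using nrm_tri[of "f x" "sum f F"] by simp
qed auto

lemma nrm_upper: "\<exists>C>0. \<forall>x. nrm x \<le> C * norm x"
proof -
  define C where "C = (\<Sum>b\<in>(Basis::(real^'n) set). nrm b) + 1"
  have C0: "C > 0" unfolding C_def using nrm_nonneg by (simp add: add_nonneg_pos sum_nonneg)
  have "nrm x \<le> C * norm x" for x
  proof -
    have "nrm x = nrm (\<Sum>b\<in>Basis. (x \<bullet> b) *\<^sub>R b)" by (simp add: euclidean_representation)
    also have "\<dots> \<le> (\<Sum>b\<in>Basis. nrm ((x \<bullet> b) *\<^sub>R b))" by (rule nrm_sum)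
    also have "\<dots> = (\<Sum>b\<in>Basis. \<bar>x \<bullet> b\<bar> * nrm b)" by (simp add: nrm_scale)
    also have "\<dots> \<le> (\<Sum>b\<in>Basis. norm x * nrm b)"
      by (intro sum_mono mult_right_mono) (auto simp: Basis_le_norm nrm_nonneg)
    also have "\<dots> = norm x * (\<Sum>b\<in>Basis. nrm b)" by (simp add: sum_distrib_left)
    also have "\<dots> \<le> C * norm x" unfolding C_def by (simp add: algebra_simps)
    finally show ?thesis .
  qed
  with C0 show ?thesis by blast
qed

lemma nrm_cont: "continuous_on UNIV nrm"
proof -
  obtain C where C: "C > 0" "\<forall>x. nrm x \<le> C * norm x" using nrm_upper by blast
  have "\<bar>nrm x - nrm y\<bar> \<le> C * dist x y" for x y
    using nrm_diff_le[of x y] nrm_diff_le[of y x] C(2)[rule_format, of "x - y"] C(2)[rule_format, of "y - x"]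
    by (auto simp: dist_norm norm_minus_commute abs_le_iff)
  then show ?thesis
    by (intro lipschitz_on_continuous_on[of C] lipschitz_onI) (auto simp: dist_real_def C less_imp_le)
qed

lemma nrm_lower: "\<exists>m>0. \<forall>x. m * norm x \<le> nrm x"
proof -
  have "sphere (0::real^'n) 1 \<noteq> {}"
    using sphere_eq_empty[of "0::real^'n" 1] by simp
  then obtain u where u: "u \<in> sphere 0 1" "\<forall>y\<in>sphere 0 1. nrm u \<le> nrm y"
    using continuous_attains_inf[OF compact_sphere _ continuous_on_subset[OF nrm_cont]] by blast
  have u0: "u \<noteq> 0" using u(1) by auto
  hence m: "nrm u > 0" using nrm_eq0 nrm_nonneg by (metis less_eq_real_def)
  have "nrm u * norm x \<le> nrm x" for x
  proof (cases "x = 0")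
    case False
    hence "(1 / norm x) *\<^sub>R x \<in> sphere 0 1" by simp
    hence "nrm u \<le> nrm ((1 / norm x) *\<^sub>R x)" using u by blast
    also have "\<dots> = nrm x / norm x" by (simp add: nrm_scale)
    finally show ?thesis using False by (simp add: field_simps)
  qed simp
  with m show ?thesis by blast
qed

lemma norm_le_nrm: "\<exists>m>0. \<forall>x. norm x \<le> nrm x / m"
proof -
  obtain m where "m > 0" "\<forall>x. m * norm x \<le> nrm x" using nrm_lower by blast
  thus ?thesis by (intro exI[of _ m]) (auto simp: field_simps mult.commute)
qed

lemma mnorm_bound: "nrm (M *v x) \<le> mnorm nrm M * nrm x"
proof (cases "x = 0")
  case False
  obtain C where C: "C > 0" "\<forall>x. nrm x \<le> C * norm x" using nrm_upper by blast
  obtain m where m: "m > 0" "\<forall>x. norm x \<le> nrm x / m" using norm_le_nrm by blast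
  obtain K where K: "\<forall>(a::real^'n^'n) (b::real^'n). norm (a *v b) \<le> norm a * norm b * K"
    using bounded_bilinear.bounded[OF bb_mvmul] by blast
  have bdd: "bdd_above ((\<lambda>u. nrm (M *v u)) ` {u. nrm u = 1})"
  proof (rule bdd_aboveI2)
    fix u assume "u \<in> {u. nrm u = 1}"
    hence "norm u \<le> 1 / m" using m(2)[rule_format, of u] by simp
    have "nrm (M *v u) \<le> C * (norm M * norm u * K)"
      using C(2) K C(1) by (meson mult_left_mono order.trans less_imp_le)
    also have "\<dots> \<le> C * (norm M * (1/m) * \<bar>K\<bar>)"
    proof (intro mult_left_mono)
      have "norm M * norm u * K \<le> norm M * norm u * \<bar>K\<bar>" by (simp add: mult_left_mono)
      also have "\<dots> \<le> norm M * (1/m) * \<bar>K\<bar>"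
        using \<open>norm u \<le> 1 / m\<close> by (intro mult_right_mono mult_left_mono) auto
      finally show "norm M * norm u * K \<le> norm M * (1/m) * \<bar>K\<bar>" .
    qed (use C in auto)
    finally show "nrm (M *v u) \<le> C * (norm M * (1/m) * \<bar>K\<bar>)" .
  qed
  have xpos: "nrm x > 0" using False nrm_eq0 nrm_nonneg by (metis less_eq_real_def)
  define u where "u = (1 / nrm x) *\<^sub>R x"
  have u1: "nrm u = 1" using xpos by (simp add: u_def nrm_scale)
  have "nrm (M *v u) \<le> mnorm nrm M"
    unfolding mnorm_def using u1 by (intro cSUP_upper bdd) auto
  moreover have "M *v x = nrm x *\<^sub>R (M *v u)"
    using xpos by (simp add: u_def matrix_vector_mult_scaleR)
  ultimately show ?thesis
    using xpos by (simp add: nrm_scale mult.commute mult_left_mono)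
qed simp

end

context fixes nrm :: "real^'n \<Rightarrow> real" assumes nrm: "is_norm nrm"
begin

lemma nrm_dual: "\<exists>a. a \<bullet> v = nrm v \<and> (\<forall>x. a \<bullet> x \<le> nrm x)"
proof (cases "v = 0")
  case True
  then show ?thesis using nrm_nonneg[OF nrm] by (intro exI[of _ 0]) (auto simp: nrm_zero[OF nrm])
next
  case False
  have vpos: "nrm v > 0" using False nrm_eq0[OF nrm] nrm_nonneg[OF nrm] by (metis less_eq_real_def)
  define v0 where "v0 = (1 / nrm v) *\<^sub>R v"
  have v01: "nrm v0 = 1" using vpos by (simp add: v0_def nrm_scale[OF nrm])
  define S where "S = {x. nrm x < 1}"
  have cS: "convex S"
    unfolding S_def convex_def
  proof (intro ballI allI impI, simp)
    fix x y :: "real^'n" and u w :: real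
    assume a: "nrm x < 1" "nrm y < 1" "0 \<le> u" "0 \<le> w" "u + w = 1"
    have "nrm (u *\<^sub>R x + w *\<^sub>R y) \<le> u * nrm x + w * nrm y"
      using nrm_tri[OF nrm, of "u *\<^sub>R x" "w *\<^sub>R y"] a by (simp add: nrm_scale[OF nrm])
    also have "\<dots> < 1"
    proof (cases "u = 0")
      case True thus ?thesis using a by simp
    next
      case False
      hence "u * nrm x < u * 1" using a by simp
      moreover have "w * nrm y \<le> w * 1" using a by (intro mult_left_mono) auto
      ultimately show ?thesis using a by simp
    qed
    finally show "nrm (u *\<^sub>R x + w *\<^sub>R y) < 1" .
  qed
  have S0: "0 \<in> S" unfolding S_def by (simp add: nrm_zero[OF nrm])
  have disj: "S \<inter> {v0} = {}" unfolding S_def using v01 by auto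
  obtain a b where ab: "a \<noteq> 0" "\<forall>x\<in>S. a \<bullet> x \<le> b" "\<forall>x\<in>{v0}. a \<bullet> x \<ge> b"
    using separating_hyperplane_sets[OF cS convex_singleton _ _ disj] S0 by blast
  have b0: "b \<ge> 0" using ab(2) S0 by force
  have le: "a \<bullet> x \<le> b * nrm x" for x
  proof -
    have "a \<bullet> x \<le> b * c" if c: "c > nrm x" for c
    proof -
      have cpos: "c > 0" using c nrm_nonneg[OF nrm, of x] by linarith
      have "(1 / c) *\<^sub>R x \<in> S" unfolding S_def using c cpos by (simp add: nrm_scale[OF nrm] field_simps)
      hence "a \<bullet> ((1 / c) *\<^sub>R x) \<le> b" using ab(2) by blast
      thus ?thesis using cpos by (simp add: field_simps)
    qed
    show ?thesis
    proof (cases "b = 0")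
      case True
      thus ?thesis using \<open>\<And>c. c > nrm x \<Longrightarrow> a \<bullet> x \<le> b * c\<close>[of "nrm x + 1"] by simp
    next
      case False
      hence bp: "b > 0" using b0 by simp
      have "(a \<bullet> x) / b \<le> nrm x"
      proof (rule dense_ge)
        fix c assume "nrm x < c"
        hence "a \<bullet> x \<le> b * c" using \<open>\<And>c. c > nrm x \<Longrightarrow> a \<bullet> x \<le> b * c\<close> by blast
        thus "(a \<bullet> x) / b \<le> c" using bp by (simp add: field_simps)
      qed
      thus ?thesis using bp by (simp add: field_simps)
    qed
  qed
  have bp: "b > 0"
  proof (rule ccontr)
    assume "\<not> b > 0" hence "b = 0" using b0 by simp
    hence "a \<bullet> a \<le> 0" using le[of a] by simp
    thus False using ab(1) inner_gt_zero_iff[of a] by linarith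
  qed
  have av0: "a \<bullet> v0 = b" using le[of v0] ab(3) v01 by force
  define l where "l = (1 / b) *\<^sub>R a"
  have "l \<bullet> x \<le> nrm x" for x using le[of x] bp by (simp add: l_def field_simps)
  moreover have "l \<bullet> v = nrm v"
  proof -
    have "v = nrm v *\<^sub>R v0" using vpos by (simp add: v0_def)
    hence "l \<bullet> v = nrm v * (l \<bullet> v0)" by (metis inner_scaleR_right)
    also have "l \<bullet> v0 = 1" using av0 bp by (simp add: l_def)
    finally show ?thesis by simp
  qed
  ultimately show ?thesis by blast
qed

lemma has_integral_nrm_le:
  assumes "(g has_integral y) S" "((\<lambda>s. nrm (g s)) has_integral r) S"
  shows "nrm y \<le> r"
proof -
  obtain a where a: "a \<bullet> y = nrm y" "\<forall>x. a \<bullet> x \<le> nrm x" using nrm_dual by blast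
  have "((\<lambda>s. a \<bullet> g s) has_integral a \<bullet> y) S"
    using has_integral_linear[OF assms(1) bounded_linear_inner_right[of a]] by (simp add: o_def)
  from has_integral_le[OF this assms(2)] a show ?thesis by auto
qed

lemma integral_nrm_le:
  assumes "g integrable_on S" "(\<lambda>s. nrm (g s)) integrable_on S"
  shows "nrm (integral S g) \<le> integral S (\<lambda>s. nrm (g s))"
  using has_integral_nrm_le assms by blast

end

lemma isCont_nrm: "is_norm nrm \<Longrightarrow> isCont nrm x"
  using nrm_cont continuous_on_eq_continuous_at open_UNIV by blast

lemma fixpoint:
  fixes nrm :: "real^'n \<Rightarrow> real" and I :: "real set"
    and \<Phi> :: "(real \<Rightarrow> real^'n) \<Rightarrow> (real \<Rightarrow> real^'n)"
  assumes nrm: "is_norm nrm" and c: "0 \<le> c" "c < 1" and R: "R \<ge> 0"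
    and self: "\<And>z. continuous_on I z \<Longrightarrow> (\<forall>t\<in>I. nrm (z t) \<le> R)
               \<Longrightarrow> continuous_on I (\<Phi> z) \<and> (\<forall>t\<in>I. nrm (\<Phi> z t) \<le> R)"
    and contr: "\<And>z w d. continuous_on I z \<Longrightarrow> (\<forall>t\<in>I. nrm (z t) \<le> R)
               \<Longrightarrow> continuous_on I w \<Longrightarrow> (\<forall>t\<in>I. nrm (w t) \<le> R)
               \<Longrightarrow> (\<forall>t\<in>I. nrm (z t - w t) \<le> d) \<Longrightarrow> (\<forall>t\<in>I. nrm (\<Phi> z t - \<Phi> w t) \<le> c * d)"
  shows "\<exists>z. continuous_on I z \<and> (\<forall>t\<in>I. nrm (z t) \<le> R) \<and> (\<forall>t\<in>I. \<Phi> z t = z t)"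
proof -
  define zs where "zs k = (\<Phi> ^^ k) (\<lambda>_. 0)" for k
  have zsS: "continuous_on I (zs k) \<and> (\<forall>t\<in>I. nrm (zs k t) \<le> R)" for k
  proof (induction k)
    case 0 thus ?case using R by (simp add: zs_def nrm_zero[OF nrm])
  next
    case (Suc k)
    have "zs (Suc k) = \<Phi> (zs k)" by (simp add: zs_def)
    thus ?case using self Suc by simp
  qed
  have zsSuc: "zs (Suc k) = \<Phi> (zs k)" for k by (simp add: zs_def)
  have step: "\<forall>t\<in>I. nrm (zs (Suc k) t - zs k t) \<le> c ^ k * R" for k
  proof (induction k)
    case 0 thus ?case using zsS[of 1] by (simp add: zs_def)
  next
    case (Suc k)
    have "\<forall>t\<in>I. nrm (\<Phi> (zs (Suc k)) t - \<Phi> (zs k) t) \<le> c * (c ^ k * R)"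
      by (rule contr) (use zsS Suc in auto)
    thus ?case by (simp add: zsSuc[symmetric] mult.assoc)
  qed
  define B where "B k = c ^ k * R / (1 - c)" for k
  have B0: "B \<longlonglongrightarrow> 0"
    unfolding B_def using c by (auto intro!: tendsto_eq_intros LIMSEQ_power_zero)
  have Bnn: "B k \<ge> 0" for k unfolding B_def using c R by auto
  have cauchy: "\<forall>t\<in>I. nrm (zs (k + j) t - zs k t) \<le> B k" for k j
  proof -
    have "\<forall>t\<in>I. nrm (zs (k + j) t - zs k t) \<le> R * (\<Sum>i<j. c ^ (k + i))"
    proof (induction j)
      case 0 thus ?case by (simp add: nrm_zero[OF nrm])
    next
      case (Suc j)
      show ?case
      proof
        fix t assume t: "t \<in> I"
        have "nrm (zs (k + Suc j) t - zs k t) \<le> nrm (zs (Suc (k + j)) t - zs (k + j) t) + nrm (zs (k + j) t - zs k t)"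
          using nrm_tri_diff[OF nrm] by simp
        also have "\<dots> \<le> c ^ (k + j) * R + R * (\<Sum>i<j. c ^ (k + i))"
          using step[of "k + j"] Suc t by (intro add_mono) auto
        finally show "nrm (zs (k + Suc j) t - zs k t) \<le> R * (\<Sum>i<Suc j. c ^ (k + i))"
          by (simp add: algebra_simps)
      qed
    qed
    moreover have "R * (\<Sum>i<j. c ^ (k + i)) \<le> B k"
    proof -
      have "(\<Sum>i<j. c ^ (k + i)) = c ^ k * (\<Sum>i<j. c ^ i)" by (simp add: power_add sum_distrib_left)
      also have "(\<Sum>i<j. c ^ i) = (1 - c ^ j) / (1 - c)" using c by (simp add: sum_gp_strict)
      also have "c ^ k * ((1 - c ^ j) / (1 - c)) \<le> c ^ k * (1 / (1 - c))"
        using c by (intro mult_left_mono divide_right_mono) auto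
      finally have "(\<Sum>i<j. c ^ (k + i)) \<le> c ^ k / (1 - c)" by simp
      hence "R * (\<Sum>i<j. c ^ (k + i)) \<le> R * (c ^ k / (1 - c))" using R by (rule mult_left_mono)
      thus ?thesis unfolding B_def by (simp add: mult.commute)
    qed
    ultimately show ?thesis by force
  qed
  obtain m where m: "m > 0" "\<forall>x. norm x \<le> nrm x / m" using norm_le_nrm[OF nrm] by blast
  have conv: "convergent (\<lambda>k. zs k t)" if t: "t \<in> I" for t
  proof -
    have "Cauchy (\<lambda>k. zs k t)"
    proof (rule metric_CauchyI)
      fix e :: real assume e: "e > 0"
      have "\<forall>\<^sub>F k in sequentially. B k / m < e"
        using order_tendstoD(2)[OF tendsto_divide[OF B0 tendsto_const[of m]] ] e m(1) by simp
      then obtain M where M: "\<forall>k\<ge>M. B k / m < e" by (auto simp: eventually_sequentially)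
      show "\<exists>M. \<forall>p\<ge>M. \<forall>n\<ge>M. dist (zs p t) (zs n t) < e"
      proof (intro exI[of _ M] allI impI)
        fix p n assume pn: "p \<ge> M" "n \<ge> M"
        have "dist (zs p t) (zs n t) \<le> B (min p n) / m"
        proof (cases "p \<le> n")
          case True
          then obtain j where "n = p + j" using le_Suc_ex by blast
          hence "nrm (zs n t - zs p t) \<le> B p" using cauchy t by blast
          hence "nrm (zs n t - zs p t) / m \<le> B p / m" using m(1) by (simp add: divide_right_mono)
          thus ?thesis using m(2)[rule_format, of "zs n t - zs p t"] True by (simp add: dist_norm norm_minus_commute min_def)
        next
          case False
          then obtain j where "p = n + j" using le_Suc_ex by (metis nat_le_linear)
          hence "nrm (zs p t - zs n t) \<le> B n" using cauchy t by blast
          hence "nrm (zs p t - zs n t) / m \<le> B n / m" using m(1) by (simp add: divide_right_mono)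
          thus ?thesis using m(2)[rule_format, of "zs p t - zs n t"] False by (simp add: dist_norm min_def)
        qed
        also have "\<dots> < e" using M pn by simp
        finally show "dist (zs p t) (zs n t) < e" .
      qed
    qed
    thus ?thesis using Cauchy_convergent_iff by blast
  qed
  define z where "z t = lim (\<lambda>k. zs k t)" for t
  have lim: "(\<lambda>k. zs k t) \<longlonglongrightarrow> z t" if "t \<in> I" for t
    using conv[OF that] unfolding z_def by (simp add: convergent_LIMSEQ_iff)
  have dz: "nrm (z t - zs k t) \<le> B k" if t: "t \<in> I" for t k
  proof -
    have "(\<lambda>j. zs (j + k) t) \<longlonglongrightarrow> z t" using LIMSEQ_ignore_initial_segment[OF lim[OF t], of k] .
    hence "(\<lambda>j. nrm (zs (j + k) t - zs k t)) \<longlonglongrightarrow> nrm (z t - zs k t)"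
      by (intro isCont_tendsto_compose[OF isCont_nrm[OF nrm]] tendsto_intros)
    thus ?thesis
      by (rule LIMSEQ_le_const2) (use cauchy[of k] t in \<open>auto simp: add.commute\<close>)
  qed
  have zc: "continuous_on I z"
  proof (rule uniform_limit_theorem[where F=sequentially and f=zs])
    show "\<forall>\<^sub>F n in sequentially. continuous_on I (zs n)" using zsS by simp
    show "uniform_limit I zs z sequentially"
    proof (rule uniform_limitI)
      fix e :: real assume e: "e > 0"
      have "\<forall>\<^sub>F k in sequentially. B k / m < e"
        using order_tendstoD(2)[OF tendsto_divide[OF B0 tendsto_const[of m]] ] e m(1) by simp
      thus "\<forall>\<^sub>F n in sequentially. \<forall>x\<in>I. dist (zs n x) (z x) < e"
      proof (rule eventually_mono, intro ballI)
        fix k x assume k: "B k / m < e" and x: "x \<in> I"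
        have "dist (zs k x) (z x) \<le> nrm (z x - zs k x) / m"
          using m by (simp add: dist_norm norm_minus_commute)
        also have "\<dots> \<le> B k / m" using dz[OF x] m by (simp add: divide_right_mono)
        finally show "dist (zs k x) (z x) < e" using k by simp
      qed
    qed
  qed simp
  have zR: "\<forall>t\<in>I. nrm (z t) \<le> R"
  proof
    fix t assume t: "t \<in> I"
    have "(\<lambda>k. nrm (zs k t)) \<longlonglongrightarrow> nrm (z t)"
      by (intro isCont_tendsto_compose[OF isCont_nrm[OF nrm]] lim t)
    thus "nrm (z t) \<le> R" by (rule LIMSEQ_le_const2) (use zsS t in auto)
  qed
  have fx: "\<Phi> z t = z t" if t: "t \<in> I" for t
  proof -
    have le: "nrm (\<Phi> z t - z t) \<le> c * B k + B (Suc k)" for k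
    proof -
      have "nrm (\<Phi> z t - \<Phi> (zs k) t) \<le> c * B k"
        using contr[OF zc zR, of "zs k" "B k"] zsS dz t by blast
      moreover have "nrm (zs (Suc k) t - z t) \<le> B (Suc k)"
        using dz[OF t, of "Suc k"] by (simp add: nrm_commute[OF nrm])
      ultimately show ?thesis
        using nrm_tri_diff[OF nrm, of "\<Phi> z t" "z t" "\<Phi> (zs k) t"] by (simp add: zsSuc)
    qed
    have "(\<lambda>k. c * B k + B (Suc k)) \<longlonglongrightarrow> c * 0 + 0"
      by (intro tendsto_intros B0 LIMSEQ_Suc)
    hence "nrm (\<Phi> z t - z t) \<le> 0"
      by (intro LIMSEQ_le_const[of "\<lambda>k. c * B k + B (Suc k)" 0]) (use le in auto)
    thus ?thesis using nrm_eq0[OF nrm] nrm_nonneg[OF nrm] by (metis antisym eq_iff_diff_eq_0)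
  qed
  show ?thesis using zc zR fx by blast
qed

context fixes A :: "real \<Rightarrow> real^'n^'n" and T :: "real \<Rightarrow> real \<Rightarrow> real^'n^'n"
  assumes tm: "is_transition_matrix A T" and Ac: "continuous_on {0..} A"
begin

lemma T_diag: "s \<ge> 0 \<Longrightarrow> T s s = mat 1"
  using tm unfolding is_transition_matrix_def by blast

lemma T_deriv: "s \<ge> 0 \<Longrightarrow> t \<ge> 0 \<Longrightarrow> ((\<lambda>r. T r s) has_vector_derivative (A t ** T t s)) (at t within {0..})"
  using tm unfolding is_transition_matrix_def by blast

lemma A_bounded: "\<exists>K>0. \<forall>s\<in>{0..b}. norm (A s) \<le> K"
proof -
  have "continuous_on {0..b} A" using Ac by (rule continuous_on_subset) auto
  hence "bounded (A ` {0..b})" by (intro compact_imp_bounded compact_continuous_image) auto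
  thus ?thesis unfolding bounded_pos by auto
qed

lemma lin_uniq:
  fixes X :: "real \<Rightarrow> real^'n^'n"
  assumes XD: "\<And>t. t \<ge> 0 \<Longrightarrow> (X has_vector_derivative (A t ** X t)) (at t within {0..})"
    and r: "r \<ge> 0" "X r = 0" and t: "t \<ge> 0"
  shows "X t = 0"
proof -
  define b where "b = max r t"
  obtain KA where KA: "KA > 0" "\<forall>s\<in>{0..b}. norm (A s) \<le> KA" using A_bounded by blast
  obtain Kb where Kb: "Kb > 0" "\<forall>(a::real^'n^'n) (b::real^'n^'n). norm (a ** b) \<le> norm a * norm b * Kb"
    using bounded_bilinear.pos_bounded[OF bb_mmul] by blast
  define k where "k = 2 * KA * Kb"
  have k0: "k \<ge> 0" using KA Kb by (simp add: k_def)
  define \<phi> where "\<phi> s = X s \<bullet> X s" for s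
  define D where "D s = 2 * (X s \<bullet> (A s ** X s))" for s
  have \<phi>D: "(\<phi> has_real_derivative D s) (at s within {0..})" if "s \<ge> 0" for s
  proof -
    have "(\<phi> has_vector_derivative (X s \<bullet> (A s ** X s) + (A s ** X s) \<bullet> X s)) (at s within {0..})"
      unfolding \<phi>_def by (rule bounded_bilinear.has_vector_derivative[OF bounded_bilinear_inner XD[OF that] XD[OF that]])
    thus ?thesis unfolding has_real_derivative_iff_has_vector_derivative D_def by (simp add: inner_commute)
  qed
  have Dbound: "\<bar>D s\<bar> \<le> k * \<phi> s" if "s \<in> {0..b}" for s
  proof -
    have "\<bar>X s \<bullet> (A s ** X s)\<bar> \<le> norm (X s) * norm (A s ** X s)" by (rule Cauchy_Schwarz_ineq2)
    also have "\<dots> \<le> norm (X s) * (KA * norm (X s) * Kb)"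
    proof (intro mult_left_mono)
      have "norm (A s) * norm (X s) * Kb \<le> KA * norm (X s) * Kb"
        using KA(2) that Kb(1) by (intro mult_right_mono) auto
      thus "norm (A s ** X s) \<le> KA * norm (X s) * Kb"
        using Kb(2)[rule_format, of "A s" "X s"] by linarith
    qed simp
    finally show ?thesis unfolding D_def k_def \<phi>_def
      by (simp add: power2_norm_eq_inner[symmetric] power2_eq_square algebra_simps)
  qed
  have \<phi>0: "\<phi> s \<ge> 0" for s unfolding \<phi>_def by simp
  have "\<phi> t = 0"
  proof (cases "r \<le> t")
    case True
    define \<psi> where "\<psi> s = exp (-k * s) * \<phi> s" for s
    define D' where "D' s = exp (-k * s) * D s + (- k * exp (- k * s)) * \<phi> s" for s
    have "\<exists>x\<in>{r..t}. \<psi> t - \<psi> r = (\<lambda>h. D' x * h) (t - r)"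
    proof (rule mvt_very_simple[OF True])
      fix x assume x: "r \<le> x" "x \<le> t"
      have "(\<phi> has_real_derivative D x) (at x within {r..t})"
        using DERIV_subset[OF \<phi>D] x r by auto
      hence "(\<psi> has_real_derivative D' x) (at x within {r..t})"
        unfolding \<psi>_def D'_def by (auto intro!: derivative_eq_intros)
      thus "(\<psi> has_derivative (\<lambda>h. D' x * h)) (at x within {r..t})"
        by (simp add: has_field_derivative_def)
    qed
    then obtain x where x: "x \<in> {r..t}" "\<psi> t - \<psi> r = D' x * (t - r)" by auto
    have "D' x \<le> 0"
    proof -
      have "D x \<le> k * \<phi> x" using Dbound[of x] x r unfolding b_def by auto
      thus ?thesis unfolding D'_def by (simp add: algebra_simps mult_left_mono)
    qed
    hence "D' x * (t - r) \<le> 0" using x True by (simp add: mult_nonpos_nonneg)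
    hence "\<psi> t \<le> \<psi> r" using x(2) by linarith
    moreover have "\<psi> r = 0" using r by (simp add: \<psi>_def \<phi>_def)
    ultimately have "exp (-k * t) * \<phi> t \<le> 0" unfolding \<psi>_def by simp
    thus ?thesis using \<phi>0[of t] by (simp add: mult_le_0_iff)
  next
    case False
    define \<psi> where "\<psi> s = exp (k * s) * \<phi> s" for s
    define D' where "D' s = exp (k * s) * D s + (k * exp (k * s)) * \<phi> s" for s
    have "\<exists>x\<in>{t..r}. \<psi> r - \<psi> t = (\<lambda>h. D' x * h) (r - t)"
    proof (rule mvt_very_simple)
      show "t \<le> r" using False by simp
      fix x assume x: "t \<le> x" "x \<le> r"
      have "(\<phi> has_real_derivative D x) (at x within {t..r})"
        using DERIV_subset[OF \<phi>D] x t by auto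
      hence "(\<psi> has_real_derivative D' x) (at x within {t..r})"
        unfolding \<psi>_def D'_def by (auto intro!: derivative_eq_intros)
      thus "(\<psi> has_derivative (\<lambda>h. D' x * h)) (at x within {t..r})"
        by (simp add: has_field_derivative_def)
    qed
    then obtain x where x: "x \<in> {t..r}" "\<psi> r - \<psi> t = D' x * (r - t)" by auto
    have "D' x \<ge> 0"
    proof -
      have "- D x \<le> k * \<phi> x" using Dbound[of x] x t unfolding b_def by auto
      hence "0 \<le> exp (k * x) * (D x + k * \<phi> x)" by simp
      thus ?thesis unfolding D'_def by (simp add: algebra_simps)
    qed
    hence "D' x * (r - t) \<ge> 0" using x False by simp
    hence "\<psi> t \<le> \<psi> r" using x(2) by linarith
    moreover have "\<psi> r = 0" using r by (simp add: \<psi>_def \<phi>_def)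
    ultimately have "exp (k * t) * \<phi> t \<le> 0" unfolding \<psi>_def by simp
    thus ?thesis using \<phi>0[of t] by (simp add: mult_le_0_iff)
  qed
  thus ?thesis unfolding \<phi>_def by simp
qed

lemma T_cocycle:
  assumes "t \<ge> 0" "r \<ge> 0" "s \<ge> 0"
  shows "T t s = T t r ** T r s"
proof -
  define X where "X t = T t s - T t r ** T r s" for t
  have XD: "(X has_vector_derivative (A u ** X u)) (at u within {0..})" if u: "u \<ge> 0" for u
  proof -
    have "((\<lambda>t. T t r ** T r s) has_vector_derivative (T u r ** 0 + (A u ** T u r) ** T r s)) (at u within {0..})"
      by (rule bounded_bilinear.has_vector_derivative[OF bb_mmul T_deriv[OF assms(2) u]])
         (rule has_vector_derivative_const)
    hence "((\<lambda>t. T t r ** T r s) has_vector_derivative (A u ** (T u r ** T r s))) (at u within {0..})"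
      by (simp add: matrix_mul_assoc)
    from has_vector_derivative_diff[OF T_deriv[OF assms(3) u] this]
    show ?thesis unfolding X_def by (simp add: bilinear_rsub[OF bilinear_mmul])
  qed
  have Xr: "X r = 0" unfolding X_def using T_diag[OF assms(2)] by simp
  have "X t = 0" using lin_uniq[of X r t, OF XD _ Xr] assms by simp
  thus ?thesis unfolding X_def by simp
qed

lemma T_cont1: "s \<ge> 0 \<Longrightarrow> continuous_on {0..} (\<lambda>t. T t s)"
  unfolding continuous_on_eq_continuous_within
proof
  fix t :: real assume "s \<ge> 0" "t \<in> {0..}"
  thus "continuous (at t within {0..}) (\<lambda>t. T t s)"
    using has_vector_derivative_continuous[OF T_deriv[of s t]] by simp
qed

lemma T_cont2: "continuous_on {0..} (\<lambda>s. T 0 s)"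
  unfolding continuous_on_eq_continuous_within
proof
  fix s0 :: real assume "s0 \<in> {0..}"
  hence s0: "s0 \<ge> 0" by simp
  let ?U = "\<lambda>t. T t 0" and ?V = "\<lambda>s. T 0 s"
  obtain Kb where Kb: "Kb > 0" "\<forall>(a::real^'n^'n) (b::real^'n^'n). norm (a ** b) \<le> norm a * norm b * Kb"
    using bounded_bilinear.pos_bounded[OF bb_mmul] by blast
  have iden: "?V s - ?V s0 = ?V s ** (?U s0 - ?U s) ** ?V s0" if "s \<ge> 0" for s
  proof -
    have "?V s ** ?U s0 ** ?V s0 = ?V s ** (?U s0 ** ?V s0)" by (simp add: matrix_mul_assoc)
    also have "?U s0 ** ?V s0 = mat 1" using T_cocycle[of s0 0 s0] T_diag s0 by simp
    finally have 1: "?V s ** ?U s0 ** ?V s0 = ?V s" by simp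
    have "?V s ** ?U s = mat 1" using T_cocycle[of 0 s 0] T_diag that by simp
    hence 2: "?V s ** ?U s ** ?V s0 = ?V s0" by simp
    show ?thesis using 1 2
      by (simp add: bilinear_rsub[OF bilinear_mmul] bilinear_lsub[OF bilinear_mmul])
  qed
  have Uc: "(?U \<longlongrightarrow> ?U s0) (at s0 within {0..})"
    using T_cont1[of 0] s0 unfolding continuous_on_def by auto
  define c where "c = norm (?V s0) * Kb * Kb"
  have c0: "c \<ge> 0" unfolding c_def using Kb by simp
  have ev: "\<forall>\<^sub>F s in at s0 within {0..}. c * norm (?U s0 - ?U s) \<le> 1/2"
  proof (cases "c = 0")
    case True thus ?thesis by simp
  next
    case False
    hence cp: "c > 0" using c0 by simp
    have "\<forall>\<^sub>F s in at s0 within {0..}. dist (?U s) (?U s0) < 1 / (2 * c)"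
      using Uc cp unfolding tendsto_iff by auto
    thus ?thesis
      by eventually_elim (use cp in \<open>auto simp: dist_norm norm_minus_commute field_simps\<close>)
  qed
  have bnd: "\<forall>\<^sub>F s in at s0 within {0..}. norm (?V s - ?V s0) \<le> 2 * norm (?V s0) * c * norm (?U s0 - ?U s)"
  proof -
    have "\<forall>\<^sub>F s in at s0 within {0..}. s \<in> {0..}" by (simp add: eventually_at_filter)
    with ev show ?thesis
    proof eventually_elim
      case (elim s)
      hence s: "s \<ge> 0" by simp
      have nb: "norm (?V s - ?V s0) \<le> norm (?V s) * (c * norm (?U s0 - ?U s))"
      proof -
        have "norm (?V s - ?V s0) = norm (?V s ** (?U s0 - ?U s) ** ?V s0)" using iden[OF s] by simp
        also have "\<dots> \<le> norm (?V s ** (?U s0 - ?U s)) * norm (?V s0) * Kb" using Kb by blast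
        also have "\<dots> \<le> (norm (?V s) * norm (?U s0 - ?U s) * Kb) * norm (?V s0) * Kb"
          using Kb by (intro mult_right_mono) auto
        finally show ?thesis unfolding c_def by (simp add: algebra_simps)
      qed
      have "norm (?V s) \<le> norm (?V s0) + norm (?V s - ?V s0)" by (rule norm_triangle_sub)
      also have "\<dots> \<le> norm (?V s0) + norm (?V s) * (1/2)"
        using nb elim(1) by (smt (verit) mult_left_mono norm_ge_zero)
      finally have "norm (?V s) \<le> 2 * norm (?V s0)" by simp
      hence "norm (?V s) * (c * norm (?U s0 - ?U s)) \<le> 2 * norm (?V s0) * (c * norm (?U s0 - ?U s))"
        using c0 by (intro mult_right_mono) auto
      with nb show ?case by (simp add: algebra_simps)
    qed
  qed
  have "((\<lambda>s. 2 * norm (?V s0) * c * norm (?U s0 - ?U s)) \<longlongrightarrow> 2 * norm (?V s0) * c * norm (?U s0 - ?U s0)) (at s0 within {0..})"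
    by (intro tendsto_intros Uc)
  hence "((\<lambda>s. 2 * norm (?V s0) * c * norm (?U s0 - ?U s)) \<longlongrightarrow> 0) (at s0 within {0..})" by simp
  from Lim_null_comparison[OF bnd this]
  have "((\<lambda>s. ?V s - ?V s0) \<longlongrightarrow> 0) (at s0 within {0..})" .
  hence "(?V \<longlongrightarrow> ?V s0) (at s0 within {0..})" by (simp add: Lim_null[symmetric])
  thus "continuous (at s0 within {0..}) ?V" unfolding continuous_within .
qed

end

lemma borel_leb: "A \<in> sets borel \<Longrightarrow> A \<in> sets lebesgue"
  by (metis sets_completionI_sets sets_lborel)

lemma ival_cases:
  assumes "\<tau> > 0"
  shows "ival \<tau> = {0..} \<or> (\<exists>r. ival \<tau> = {0..<r})"
proof (cases \<tau>)
  case (real r) thus ?thesis unfolding ival_def by (auto intro!: exI[of _ r])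
next
  case PInf thus ?thesis unfolding ival_def by auto
next
  case MInf thus ?thesis using assms by simp
qed

lemma ival_leb: "\<tau> > 0 \<Longrightarrow> ival \<tau> \<in> sets lebesgue"
proof -
  assume "\<tau> > 0"
  then consider "ival \<tau> = {0..}" | r where "ival \<tau> = {0..<r}" using ival_cases by blast
  thus ?thesis
  proof cases
    case 1 thus ?thesis by (simp add: borel_leb borel_closed)
  next
    case 2
    have "{0..<r} = {0..} \<inter> {..<(r::real)}" by auto
    also have "\<dots> \<in> sets borel" by (intro sets.Int borel_closed borel_open) auto
    finally show ?thesis using 2 by (simp add: borel_leb)
  qed
qed

lemma ival_sub: "ival \<tau> \<subseteq> {0..}" unfolding ival_def by auto

lemma ival_interval: "t \<in> ival \<tau> \<Longrightarrow> 0 \<le> s \<Longrightarrow> s \<le> t \<Longrightarrow> s \<in> ival \<tau>"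
  unfolding ival_def using order.strict_trans1[of "ereal s" "ereal t" \<tau>] by auto

lemma ival_above: "t \<in> ival \<tau> \<Longrightarrow> \<exists>b. t < b \<and> b \<in> ival \<tau>"
proof -
  assume t: "t \<in> ival \<tau>"
  hence "ereal t < \<tau>" unfolding ival_def by simp
  then obtain b where "ereal t < ereal b" "ereal b < \<tau>" using ereal_dense2 by blast
  thus ?thesis using t unfolding ival_def by auto
qed

lemma DOMI:
  fixes f :: "real \<Rightarrow> 'b::euclidean_space"
  assumes S: "S \<in> sets lebesgue" "S \<subseteq> {a..}" and fc: "continuous_on S f"
    and lam: "lam > 0" and bnd: "\<And>s. s \<in> S \<Longrightarrow> norm (f s) \<le> K * exp (- lam * s)"
  shows "f integrable_on S"
proof -
  define g where "g s = \<bar>K\<bar> * exp (- lam * s)" for s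
  have "(\<lambda>s. exp (- lam * s)) integrable_on {a..}" using integrable_on_exp_minus_to_infinity[OF lam] by simp
  from integrable_on_cmult_left[OF this, of "\<bar>K\<bar>"]
  have "g integrable_on {a..}" unfolding g_def by simp
  hence "g absolutely_integrable_on {a..}"
    by (rule nonnegative_absolutely_integrable_1) (simp add: g_def)
  hence "g absolutely_integrable_on S"
    by (rule set_integrable_subset) (use S in auto)
  hence gi: "g integrable_on S" using absolutely_integrable_on_def by blast
  show ?thesis
  proof (rule measurable_bounded_by_integrable_imp_integrable[OF _ gi _ S(1)])
    show "f \<in> borel_measurable (lebesgue_on S)" by (rule continuous_imp_measurable_on_sets_lebesgue[OF fc S(1)])
    fix x assume "x \<in> S"
    hence "norm (f x) \<le> K * exp (- lam * x)" by (rule bnd)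
    also have "\<dots> \<le> g x" unfolding g_def by (intro mult_right_mono) auto
    finally show "norm (f x) \<le> g x" .
  qed
qed

lemma exp_int_0t:
  fixes lam C t :: real
  assumes "lam > 0" and that: "t \<ge> 0"
  shows "((\<lambda>s. C * exp (- lam * (t - s))) has_integral (C / lam - C * exp (- lam * t) / lam)) {0..t}"
proof -
  have "((\<lambda>s. C * exp (- lam * (t - s))) has_integral
         ((\<lambda>s. C * exp (- lam * (t - s)) / lam) t - (\<lambda>s. C * exp (- lam * (t - s)) / lam) 0)) {0..t}"
  proof (intro fundamental_theorem_of_calculus)
    fix x assume "x \<in> {0..t}"
    have "((\<lambda>s. C * exp (- lam * (t - s)) / lam) has_real_derivative C * exp (- lam * (t - x))) (at x within {0..t})"
      using assms by (auto intro!: derivative_eq_intros simp: field_simps)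
    thus "((\<lambda>s. C * exp (- lam * (t - s)) / lam) has_vector_derivative C * exp (- lam * (t - x))) (at x within {0..t})"
      by (simp add: has_real_derivative_iff_has_vector_derivative)
  qed (use that in auto)
  thus ?thesis by simp
qed

lemma exp_int_tinf:
  fixes lam C t :: real
  assumes "lam > 0"
  shows "((\<lambda>s. C * exp (- lam * (s - t))) has_integral (C / lam)) {t..}"
proof -
  have "((\<lambda>s. (C * exp (lam * t)) * exp (- lam * s)) has_integral (C * exp (lam * t)) * (exp (- lam * t) / lam)) {t..}"
    using has_integral_mult_right[OF has_integral_exp_minus_to_infinity[OF assms, of t]] by simp
  moreover have "(\<lambda>s. (C * exp (lam * t)) * exp (- lam * s)) = (\<lambda>s. C * exp (- lam * (s - t)))"
    by (auto simp: algebra_simps exp_add[symmetric])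
  moreover have "(C * exp (lam * t)) * (exp (- lam * t) / lam) = C / lam"
    by (simp add: exp_minus field_simps)
  ultimately show ?thesis by metis
qed

definition Psi :: "(real \<Rightarrow> real \<Rightarrow> real^'n^'n) \<Rightarrow> real^'n \<Rightarrow> (real \<Rightarrow> real^'n) \<Rightarrow> real \<Rightarrow> real^'n" where
  "Psi T K G t = T t 0 *v (integral {0..t} (\<lambda>s. T 0 s *v G s) - K)"

lemma exp_shift: fixes lam s t :: real shows "exp (- lam * (s - t)) = exp (lam * t) * exp (- lam * s)"
proof -
  have "- lam * (s - t) = lam * t + (- lam * s)" by (simp add: algebra_simps)
  thus ?thesis by (metis exp_add)
qed

context fixes A :: "real \<Rightarrow> real^'n^'n" and T :: "real \<Rightarrow> real \<Rightarrow> real^'n^'n"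
  assumes tm: "is_transition_matrix A T" and Ac: "continuous_on {0..} A"
begin

lemma VG_cont: "continuous_on S G \<Longrightarrow> S \<subseteq> {0..} \<Longrightarrow> continuous_on S (\<lambda>s. T 0 s *v G s)"
  by (intro bounded_bilinear.continuous_on[OF bb_mvmul] continuous_on_subset[OF T_cont2[OF tm Ac]]) auto

lemma TtG_cont:
  assumes "t \<ge> 0" "continuous_on S G" "S \<subseteq> {0..}"
  shows "continuous_on S (\<lambda>s. T t s *v G s)"
proof -
  have "continuous_on S (\<lambda>s. T t 0 *v (T 0 s *v G s))"
    by (intro bounded_bilinear.continuous_on[OF bb_mvmul] continuous_on_const VG_cont assms)
  moreover have "T t 0 *v (T 0 s *v G s) = T t s *v G s" if "s \<in> S" for s
    using T_cocycle[OF tm Ac, of t 0 s] that assms by (auto simp: matrix_vector_mul_assoc)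
  ultimately show ?thesis using continuous_on_cong by force
qed

lemma Psi_deriv:
  assumes G: "continuous_on (ival \<tau>) G" and t: "t \<in> ival \<tau>"
  shows "(Psi T K G has_vector_derivative (A t *v Psi T K G t + G t)) (at t within ival \<tau>)"
proof -
  obtain b where b: "t < b" "b \<in> ival \<tau>" using ival_above[OF t] by blast
  have t0: "t \<ge> 0" using t by (simp add: ival_def)
  have sub: "{0..b} \<subseteq> ival \<tau>" using b(2) ival_interval by auto
  have Fc: "continuous_on {0..b} (\<lambda>s. T 0 s *v G s)"
    using VG_cont[OF continuous_on_subset[OF G sub]] by auto
  have "((\<lambda>u. integral {0..u} (\<lambda>s. T 0 s *v G s)) has_vector_derivative T 0 t *v G t) (at t within {0..b})"
    using integral_has_vector_derivative[OF Fc] t0 b by auto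
  moreover have "at t within {0..b} = at t within ival \<tau>"
  proof (rule at_within_nhd[of _ "{..<b}"])
    show "{0..b} \<inter> {..<b} - {t} = ival \<tau> \<inter> {..<b} - {t}"
      using b(2) ival_interval[OF b(2)] by (auto simp: ival_def)
  qed (use b in auto)
  ultimately have WD: "((\<lambda>u. integral {0..u} (\<lambda>s. T 0 s *v G s) - K) has_vector_derivative T 0 t *v G t) (at t within ival \<tau>)"
    using has_vector_derivative_diff[OF _ has_vector_derivative_const] by fastforce
  have UD: "((\<lambda>u. T u 0) has_vector_derivative A t ** T t 0) (at t within ival \<tau>)"
    by (rule has_vector_derivative_within_subset[OF T_deriv[OF tm Ac] ival_sub]) (use t0 in auto)
  from bounded_bilinear.has_vector_derivative[OF bb_mvmul UD WD]
  have "(Psi T K G has_vector_derivative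
         T t 0 *v (T 0 t *v G t) + (A t ** T t 0) *v (integral {0..t} (\<lambda>s. T 0 s *v G s) - K)) (at t within ival \<tau>)"
    unfolding Psi_def by simp
  moreover have "T t 0 *v (T 0 t *v G t) = G t"
  proof -
    have "T t 0 ** T 0 t = mat 1" using T_cocycle[OF tm Ac, of t 0 t] T_diag[OF tm Ac, of t] t0 by simp
    thus ?thesis by (simp add: matrix_vector_mul_assoc)
  qed
  moreover have "(A t ** T t 0) *v (integral {0..t} (\<lambda>s. T 0 s *v G s) - K) = A t *v Psi T K G t"
    unfolding Psi_def by (simp add: matrix_vector_mul_assoc)
  ultimately show ?thesis by (simp add: add.commute)
qed

end

context fixes A :: "real \<Rightarrow> real^'n^'n" and T :: "real \<Rightarrow> real \<Rightarrow> real^'n^'n"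
  and nrm :: "real^'n \<Rightarrow> real" and N lam :: real
  assumes tm: "is_transition_matrix A T" and Ac: "continuous_on {0..} A"
    and nrm: "is_norm nrm" and Np: "N > 0" and lp: "lam > 0"
begin

lemma nrm_int_cont: "continuous_on S H \<Longrightarrow> continuous_on S (\<lambda>s. nrm (H s))"
  using continuous_on_compose2[OF nrm_cont[OF nrm] _ subset_UNIV] by blast

lemma Psi_contr_bound:
  assumes HC: "\<forall>t s. 0 \<le> s \<and> s \<le> t \<longrightarrow> mnorm nrm (T t s) \<le> N * exp (- lam * (t - s))"
    and G: "continuous_on (ival \<tau>) G" and M: "\<forall>s\<in>ival \<tau>. nrm (G s) \<le> M" and t: "t \<in> ival \<tau>"
  shows "nrm (Psi T 0 G t) \<le> N * M / lam"
proof -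
  have t0: "t \<ge> 0" using t by (simp add: ival_def)
  have sub: "{0..t} \<subseteq> ival \<tau>" using t ival_interval by auto
  have M0: "M \<ge> 0" using M t nrm_nonneg[OF nrm] by (meson order.trans)
  define F where "F s = T 0 s *v G s" for s
  define H where "H s = T t s *v G s" for s
  have Fi: "F integrable_on {0..t}"
    unfolding F_def by (intro integrable_continuous_interval VG_cont[OF tm Ac] continuous_on_subset[OF G sub]) auto
  have Hc: "continuous_on {0..t} H"
    unfolding H_def by (intro TtG_cont[OF tm Ac] t0 continuous_on_subset[OF G sub]) auto
  have eq: "Psi T 0 G t = integral {0..t} H"
  proof -
    have "Psi T 0 G t = integral {0..t} ((*v) (T t 0) \<circ> F)"
      unfolding Psi_def F_def[symmetric] by (simp add: integral_linear[OF Fi matrix_vector_mul_bounded_linear])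
    also have "\<dots> = integral {0..t} H"
    proof (rule integral_cong)
      fix s assume "s \<in> {0..t}"
      hence "s \<ge> 0" by auto
      hence "T t s = T t 0 ** T 0 s" using T_cocycle[OF tm Ac, of t 0 s] t0 by simp
      thus "((*v) (T t 0) \<circ> F) s = H s" by (simp add: F_def H_def matrix_vector_mul_assoc)
    qed
    finally show ?thesis .
  qed
  have "nrm (integral {0..t} H) \<le> integral {0..t} (\<lambda>s. nrm (H s))"
    by (intro integral_nrm_le[OF nrm] integrable_continuous_interval Hc nrm_int_cont)
  also have "\<dots> \<le> integral {0..t} (\<lambda>s. (N * M) * exp (- lam * (t - s)))"
  proof (rule integral_le)
    show "(\<lambda>s. nrm (H s)) integrable_on {0..t}" by (intro integrable_continuous_interval Hc nrm_int_cont)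
    show "(\<lambda>s. (N * M) * exp (- lam * (t - s))) integrable_on {0..t}"
      using exp_int_0t[OF lp t0] by blast
    fix s assume s: "s \<in> {0..t}"
    have "nrm (H s) \<le> mnorm nrm (T t s) * nrm (G s)" unfolding H_def by (rule mnorm_bound[OF nrm])
    also have "\<dots> \<le> (N * exp (- lam * (t - s))) * M"
      using HC s M sub nrm_nonneg[OF nrm] Np by (intro mult_mono) auto
    finally show "nrm (H s) \<le> (N * M) * exp (- lam * (t - s))" by (simp add: algebra_simps)
  qed
  also have "\<dots> = N * M / lam - N * M * exp (- lam * t) / lam"
    by (rule integral_unique[OF exp_int_0t[OF lp t0]])
  also have "\<dots> \<le> N * M / lam" using Np M0 lp by simp
  finally show ?thesis using eq by simp
qed

lemma Diff_leb: fixes S :: "real set" and t :: real shows "S \<in> sets lebesgue \<Longrightarrow> S - {0..t} \<in> sets lebesgue"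
proof -
  assume S: "S \<in> sets lebesgue"
  have "{0..t} \<in> sets lebesgue" by (intro borel_leb borel_closed) auto
  with S show ?thesis by (rule sets.Diff)
qed

lemma Psi_exp:
  assumes HE: "\<forall>t s. 0 \<le> t \<and> t \<le> s \<longrightarrow> mnorm nrm (T t s) \<le> N * exp (- lam * (s - t))"
    and tau: "\<tau> > 0"
    and G: "continuous_on (ival \<tau>) G" and M: "\<forall>s\<in>ival \<tau>. nrm (G s) \<le> M"
  shows "(\<lambda>s. T 0 s *v G s) integrable_on ival \<tau>"
    and "t \<in> ival \<tau> \<Longrightarrow> nrm (Psi T (integral (ival \<tau>) (\<lambda>s. T 0 s *v G s)) G t) \<le> N * M / lam"
proof -
  obtain m0 where m0: "m0 > 0" "\<forall>x. norm x \<le> nrm x / m0" using norm_le_nrm[OF nrm] by blast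
  define I where "I = ival \<tau>"
  have Ileb: "I \<in> sets lebesgue" unfolding I_def by (rule ival_leb[OF tau])
  define F where "F s = T 0 s *v G s" for s
  have Fbound: "norm (F s) \<le> (N * M / m0) * exp (- lam * s)" if s: "s \<in> I" for s
  proof -
    have "norm (F s) \<le> nrm (F s) / m0" using m0 by blast
    also have "nrm (F s) \<le> mnorm nrm (T 0 s) * nrm (G s)" unfolding F_def by (rule mnorm_bound[OF nrm])
    also have "\<dots> \<le> (N * exp (- lam * (s - 0))) * M"
      using HE[rule_format, of 0 s] s M nrm_nonneg[OF nrm] Np by (intro mult_mono) (auto simp: I_def ival_def)
    finally show ?thesis using m0 by (simp add: divide_right_mono algebra_simps)
  qed
  have Fc: "continuous_on S F" if "S \<subseteq> I" for S
    unfolding F_def by (intro VG_cont[OF tm Ac] continuous_on_subset[OF G]) (use that ival_sub in \<open>auto simp: I_def\<close>)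
  have FI: "F integrable_on I"
    by (rule DOMI[OF Ileb _ Fc lp Fbound]) (auto simp: I_def ival_def)
  thus "(\<lambda>s. T 0 s *v G s) integrable_on ival \<tau>" unfolding F_def I_def .
  assume t: "t \<in> ival \<tau>"
  have t0: "t \<ge> 0" using t by (simp add: ival_def)
  have M0: "M \<ge> 0" using M t nrm_nonneg[OF nrm] by (meson order.trans)
  have sub: "{0..t} \<subseteq> I" using t ival_interval unfolding I_def by auto
  define It where "It = I - {0..t}"
  have Itleb: "It \<in> sets lebesgue" unfolding It_def by (rule Diff_leb[OF Ileb])
  have ItI: "It \<subseteq> I" unfolding It_def by auto
  have Itt: "It \<subseteq> {t..}" unfolding It_def I_def ival_def by auto
  have FIt: "F integrable_on It"
    by (rule DOMI[OF Itleb _ Fc[OF ItI] lp, of 0 "N * M / m0"]) (use Fbound ItI Itt t0 in auto)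
  have F0t: "F integrable_on {0..t}" by (intro integrable_continuous_interval Fc sub)
  have split: "integral I F = integral {0..t} F + integral It F"
  proof -
    have "(F has_integral (integral {0..t} F + integral It F)) ({0..t} \<union> It)"
      by (rule has_integral_Un) (use F0t FIt in \<open>auto simp: It_def\<close>)
    moreover have "{0..t} \<union> It = I" using sub unfolding It_def by auto
    ultimately show ?thesis by (simp add: integral_unique)
  qed
  define H where "H s = T t s *v G s" for s
  have Hc: "continuous_on It H"
    unfolding H_def by (intro TtG_cont[OF tm Ac t0] continuous_on_subset[OF G]) (use ItI ival_sub in \<open>auto simp: I_def\<close>)
  have Hbound: "nrm (H s) \<le> (N * M) * exp (- lam * (s - t))" if s: "s \<in> It" for s
  proof -
    have "nrm (H s) \<le> mnorm nrm (T t s) * nrm (G s)" unfolding H_def by (rule mnorm_bound[OF nrm])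
    also have "\<dots> \<le> (N * exp (- lam * (s - t))) * M"
      using HE s M nrm_nonneg[OF nrm] Np t0 Itt ItI by (intro mult_mono) (auto simp: I_def)
    finally show ?thesis by (simp add: algebra_simps)
  qed
  have Hi: "H integrable_on It"
  proof (rule DOMI[OF Itleb _ Hc lp])
    fix s assume s: "s \<in> It"
    have "norm (H s) \<le> nrm (H s) / m0" using m0 by blast
    also have "\<dots> \<le> (N * M) * exp (- lam * (s - t)) / m0" using Hbound[OF s] m0 by (simp add: divide_right_mono)
    also have "\<dots> = (N * M * exp (lam * t) / m0) * exp (- lam * s)" unfolding exp_shift by simp
    finally show "norm (H s) \<le> (N * M * exp (lam * t) / m0) * exp (- lam * s)" .
  qed (use Itt in auto)
  have nHi: "(\<lambda>s. nrm (H s)) integrable_on It"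
  proof (rule DOMI[OF Itleb _ nrm_int_cont[OF Hc] lp])
    fix s assume s: "s \<in> It"
    have "norm (nrm (H s)) = nrm (H s)" using nrm_nonneg[OF nrm] by simp
    also have "\<dots> \<le> (N * M) * exp (- lam * (s - t))" by (rule Hbound[OF s])
    also have "\<dots> = (N * M * exp (lam * t)) * exp (- lam * s)" unfolding exp_shift by simp
    finally show "norm (nrm (H s)) \<le> (N * M * exp (lam * t)) * exp (- lam * s)" .
  qed (use Itt in auto)
  define E where "E s = (N * M) * exp (- lam * (s - t))" for s
  have EIt: "E integrable_on It"
  proof (rule DOMI[OF Itleb _ _ lp])
    show "continuous_on It E" unfolding E_def by (intro continuous_intros)
    fix s assume s: "s \<in> It"
    have "norm (E s) = E s" unfolding E_def using Np M0 by simp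
    also have "\<dots> = (N * M * exp (lam * t)) * exp (- lam * s)" unfolding E_def unfolding exp_shift by simp
    finally show "norm (E s) \<le> (N * M * exp (lam * t)) * exp (- lam * s)" by simp
  qed (use Itt in auto)
  have Einf: "(E has_integral (N * M / lam)) {t..}" unfolding E_def by (rule exp_int_tinf[OF lp])
  have eqP: "Psi T (integral (ival \<tau>) (\<lambda>s. T 0 s *v G s)) G t = - integral It H"
  proof -
    have "Psi T (integral (ival \<tau>) (\<lambda>s. T 0 s *v G s)) G t = T t 0 *v (integral {0..t} F - integral I F)"
      unfolding Psi_def F_def I_def ..
    also have "\<dots> = - (T t 0 *v integral It F)"
      using matrix_vector_mult_diff_distrib[of "T t 0" 0 "integral It F"] by (simp add: split)
    also have "T t 0 *v integral It F = integral It ((*v) (T t 0) \<circ> F)"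
      by (simp add: integral_linear[OF FIt matrix_vector_mul_bounded_linear])
    also have "\<dots> = integral It H"
    proof (rule integral_cong)
      fix s assume "s \<in> It"
      hence "s \<ge> 0" using Itt t0 by auto
      hence "T t s = T t 0 ** T 0 s" using T_cocycle[OF tm Ac, of t 0 s] t0 by simp
      thus "((*v) (T t 0) \<circ> F) s = H s" by (simp add: F_def H_def matrix_vector_mul_assoc)
    qed
    finally show ?thesis .
  qed
  have "nrm (integral It H) \<le> integral It (\<lambda>s. nrm (H s))" by (rule integral_nrm_le[OF nrm Hi nHi])
  also have "\<dots> \<le> integral It E" by (rule integral_le[OF nHi EIt]) (use Hbound in \<open>auto simp: E_def\<close>)
  also have "\<dots> \<le> integral {t..} E"
    by (rule integral_subset_le[OF Itt EIt]) (use Einf Np M0 in \<open>auto simp: E_def\<close>)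
  also have "\<dots> = N * M / lam" using Einf by (simp add: integral_unique)
  finally show "nrm (Psi T (integral (ival \<tau>) (\<lambda>s. T 0 s *v G s)) G t) \<le> N * M / lam"
    using eqP nrm_minus[OF nrm] by simp
qed

end

lemma Psi_diff:
  fixes A :: "real \<Rightarrow> real^'n^'n" and T :: "real \<Rightarrow> real \<Rightarrow> real^'n^'n"
  assumes tm: "is_transition_matrix A T" and Ac: "continuous_on {0..} A"
    and t: "t \<in> ival \<tau>" and G1: "continuous_on (ival \<tau>) G1" and G2: "continuous_on (ival \<tau>) G2"
  shows "Psi T K1 G1 t - Psi T K2 G2 t = Psi T (K1 - K2) (\<lambda>s. G1 s - G2 s) t"
proof -
  have sub: "{0..t} \<subseteq> ival \<tau>" using t ival_interval by auto
  have i1: "(\<lambda>s. T 0 s *v G1 s) integrable_on {0..t}"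
    by (intro integrable_continuous_interval VG_cont[OF tm Ac] continuous_on_subset[OF G1 sub]) auto
  have i2: "(\<lambda>s. T 0 s *v G2 s) integrable_on {0..t}"
    by (intro integrable_continuous_interval VG_cont[OF tm Ac] continuous_on_subset[OF G2 sub]) auto
  define W1 where "W1 = integral {0..t} (\<lambda>s. T 0 s *v G1 s)"
  define W2 where "W2 = integral {0..t} (\<lambda>s. T 0 s *v G2 s)"
  define W12 where "W12 = integral {0..t} (\<lambda>s. T 0 s *v (G1 s - G2 s))"
  have "W12 = integral {0..t} (\<lambda>s. T 0 s *v G1 s - T 0 s *v G2 s)"
    unfolding W12_def by (simp only: matrix_vector_mult_diff_distrib)
  hence eq: "W12 = W1 - W2" unfolding W1_def W2_def using integral_diff[OF i1 i2] by simp
  have "Psi T K1 G1 t - Psi T K2 G2 t = T t 0 *v (W1 - K1) - T t 0 *v (W2 - K2)"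
    unfolding Psi_def W1_def W2_def ..
  also have "\<dots> = T t 0 *v ((W1 - K1) - (W2 - K2))" by (rule matrix_vector_mult_diff_distrib[symmetric])
  also have "(W1 - K1) - (W2 - K2) = W12 - (K1 - K2)" using eq by (simp add: algebra_simps)
  also have "T t 0 *v (W12 - (K1 - K2)) = Psi T (K1 - K2) (\<lambda>s. G1 s - G2 s) t"
    unfolding Psi_def W12_def ..
  finally show ?thesis .
qed

theorem theorem3:
  fixes nrm :: "real^'n \<Rightarrow> real"
    and H :: "(real^'n) set"
    and A :: "real \<Rightarrow> real^'n^'n"
    and T :: "real \<Rightarrow> real \<Rightarrow> real^'n^'n"
    and f :: "real \<Rightarrow> real^'n \<Rightarrow> real^'n"
    and N lam \<delta> L :: real
  assumes "is_norm nrm"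
    and "H \<noteq> {}"
    and "continuous_on {0..} A"
    and "continuous_on ({0..} \<times> UNIV) (\<lambda>(t, x). f t x)"
    and "is_transition_matrix A T"
    and "exp_contraction nrm T N lam \<or> exp_expansion nrm T N lam"
    and "\<delta> > 0" and "L > 0"
    and "\<forall>t\<ge>0. \<forall>x1\<in>nbhd nrm \<delta> H. \<forall>x2\<in>nbhd nrm \<delta> H.
           nrm (f t x1 - f t x2) \<le> L * nrm (x1 - x2)"
    and "L < lam / N"
  shows "cond_lip_shadowing nrm (\<lambda>t x. A t *v x + f t x) H"
proof -
  have nrm: "is_norm nrm" using assms(1) .
  have Ac: "continuous_on {0..} A" using assms(3) .
  have fc: "continuous_on ({0..} \<times> UNIV) (\<lambda>(t, x). f t x)" using assms(4) .
  have tm: "is_transition_matrix A T" using assms(5) .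
  have dich: "exp_contraction nrm T N lam \<or> exp_expansion nrm T N lam" using assms(6) .
  have dp: "\<delta> > 0" and Lp: "L > 0" using assms(7,8) by auto
  have Lip: "\<forall>t\<ge>0. \<forall>x1\<in>nbhd nrm \<delta> H. \<forall>x2\<in>nbhd nrm \<delta> H. nrm (f t x1 - f t x2) \<le> L * nrm (x1 - x2)"
    using assms(9) .
  have Np: "N > 0" and lp: "lam > 0"
    using dich by (auto simp: exp_contraction_def exp_expansion_def exp_dichotomy_def)
  have NLlt: "N * L < lam" using assms(10) Np by (simp add: field_simps)
  define c where "c = N * L / lam"
  have c0: "c \<ge> 0" and c1: "c < 1" unfolding c_def using Np Lp lp NLlt by auto
  define \<kappa> where "\<kappa> = N / (lam - N * L)"
  have kp: "\<kappa> > 0" unfolding \<kappa>_def using Np NLlt by simp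
  define \<epsilon>0 where "\<epsilon>0 = \<delta> / \<kappa>"
  have e0p: "\<epsilon>0 > 0" unfolding \<epsilon>0_def using dp kp by simp
  show ?thesis unfolding cond_lip_shadowing_def
  proof (rule exI[of _ \<epsilon>0], rule exI[of _ \<kappa>], intro conjI allI impI e0p kp)
    fix \<epsilon> :: real and \<tau> :: ereal and y :: "real \<Rightarrow> real^'n"
    assume asm: "0 < \<epsilon> \<and> \<epsilon> \<le> \<epsilon>0 \<and> 0 < \<tau> \<and> pseudosol_le nrm (\<lambda>t x. A t *v x + f t x) \<tau> \<epsilon> y \<and> (\<forall>t\<in>ival \<tau>. y t \<in> H)"
    hence ep: "\<epsilon> > 0" and ele: "\<epsilon> \<le> \<epsilon>0" and tau: "\<tau> > 0" and yH: "\<forall>t\<in>ival \<tau>. y t \<in> H" by auto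
    define I where "I = ival \<tau>"
    obtain y' where y'c: "continuous_on I y'"
      and yD: "\<forall>t\<in>I. (y has_vector_derivative y' t) (at t within I)"
      and yps: "\<forall>t\<in>I. nrm (y' t - (A t *v y t + f t (y t))) \<le> \<epsilon>"
      using asm unfolding pseudosol_le_def I_def by blast
    have Isub: "I \<subseteq> {0..}" unfolding I_def by (rule ival_sub)
    define R where "R = \<kappa> * \<epsilon>"
    have R0: "R \<ge> 0" unfolding R_def using kp ep by simp
    have RD: "R \<le> \<delta>" unfolding R_def using ele kp by (simp add: \<epsilon>0_def field_simps)
    have Rid: "N * (L * R + \<epsilon>) / lam = R"
    proof -
      have "\<kappa> * (lam - N * L) = N" unfolding \<kappa>_def using NLlt by simp
      hence "N * (L * R + \<epsilon>) = lam * R" unfolding R_def by (simp add: algebra_simps)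
      thus ?thesis using lp by simp
    qed
    have yc: "continuous_on I y"
      unfolding continuous_on_eq_continuous_within
      using yD has_vector_derivative_continuous by blast
    have fcomp: "continuous_on I (\<lambda>s. f s (g s))" if g: "continuous_on I g" for g
    proof -
      have "continuous_on I (\<lambda>s. (\<lambda>(t, x). f t x) (s, g s))"
        by (rule continuous_on_compose2[OF fc]) (use g Isub in \<open>auto intro!: continuous_intros\<close>)
      thus ?thesis by simp
    qed
    define h where "h s = y' s - (A s *v y s + f s (y s))" for s
    have hc: "continuous_on I h"
      unfolding h_def
      by (intro continuous_intros y'c bounded_bilinear.continuous_on[OF bb_mvmul] continuous_on_subset[OF Ac Isub] yc fcomp)
    define GG where "GG z s = f s (y s + z s) - f s (y s) - h s" for z s
    have GGc: "continuous_on I (GG z)" if "continuous_on I z" for z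
      unfolding GG_def by (intro continuous_intros fcomp that yc hc)
    have inN: "y s + w \<in> nbhd nrm \<delta> H" if "s \<in> I" "nrm w \<le> \<delta>" for s w
      unfolding nbhd_def using that yH I_def by (intro CollectI bexI[of _ "y s"]) auto
    have Lip': "nrm (f s (y s + w1) - f s (y s + w2)) \<le> L * nrm (w1 - w2)"
      if "s \<in> I" "nrm w1 \<le> \<delta>" "nrm w2 \<le> \<delta>" for s w1 w2
      using Lip[rule_format, of s "y s + w1" "y s + w2"] inN[of s w1] inN[of s w2] that Isub by auto
    have GGb: "nrm (GG z s) \<le> L * R + \<epsilon>" if z: "\<forall>t\<in>I. nrm (z t) \<le> R" and s: "s \<in> I" for z s
    proof -
      have "nrm (GG z s) \<le> nrm (f s (y s + z s) - f s (y s + 0)) + nrm (h s)"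
        unfolding GG_def using nrm_tri_diff[OF nrm, of "f s (y s + z s) - f s (y s)" "h s" 0]
        by (simp add: nrm_minus[OF nrm])
      also have "\<dots> \<le> L * nrm (z s - 0) + \<epsilon>"
        using Lip'[OF s, of "z s" 0] z s RD yps dp unfolding h_def by (intro add_mono) (auto simp: nrm_zero[OF nrm])
      also have "\<dots> \<le> L * R + \<epsilon>" using z s Lp by simp
      finally show ?thesis .
    qed
    have GGd: "nrm (GG z s - GG w s) \<le> L * d"
      if z: "\<forall>t\<in>I. nrm (z t) \<le> R" and w: "\<forall>t\<in>I. nrm (w t) \<le> R"
        and d: "\<forall>t\<in>I. nrm (z t - w t) \<le> d" and s: "s \<in> I" for z w d s
    proof -
      have "GG z s - GG w s = f s (y s + z s) - f s (y s + w s)" unfolding GG_def by simp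
      moreover have "nrm (z s) \<le> \<delta>" "nrm (w s) \<le> \<delta>" using z w s RD by force+
      ultimately have "nrm (GG z s - GG w s) \<le> L * nrm (z s - w s)" using Lip'[OF s, of "z s" "w s"] by simp
      also have "\<dots> \<le> L * d" using d s Lp by simp
      finally show ?thesis .
    qed
    obtain Kf :: "(real \<Rightarrow> real^'n) \<Rightarrow> real^'n" where
      KB: "\<And>G M t. continuous_on I G \<Longrightarrow> \<forall>s\<in>I. nrm (G s) \<le> M \<Longrightarrow> t \<in> I \<Longrightarrow> nrm (Psi T (Kf G) G t) \<le> N * M / lam"
      and KL: "\<And>G1 G2 M1 M2. continuous_on I G1 \<Longrightarrow> continuous_on I G2 \<Longrightarrow> \<forall>s\<in>I. nrm (G1 s) \<le> M1
                 \<Longrightarrow> \<forall>s\<in>I. nrm (G2 s) \<le> M2 \<Longrightarrow> Kf (\<lambda>s. G1 s - G2 s) = Kf G1 - Kf G2"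
    proof (cases "exp_contraction nrm T N lam")
      case True
      hence HC: "\<forall>t s. 0 \<le> s \<and> s \<le> t \<longrightarrow> mnorm nrm (T t s) \<le> N * exp (- lam * (t - s))"
        unfolding exp_contraction_def exp_dichotomy_def by simp
      show ?thesis
      proof (rule that[of "\<lambda>G. 0"])
        fix G M t assume "continuous_on I G" "\<forall>s\<in>I. nrm (G s) \<le> M" "t \<in> I"
        thus "nrm (Psi T 0 G t) \<le> N * M / lam"
          using Psi_contr_bound[OF tm Ac nrm Np lp HC] unfolding I_def by blast
      qed simp
    next
      case False
      hence "exp_expansion nrm T N lam" using dich by simp
      hence HE: "\<forall>t s. 0 \<le> t \<and> t \<le> s \<longrightarrow> mnorm nrm (T t s) \<le> N * exp (- lam * (s - t))"
        unfolding exp_expansion_def exp_dichotomy_def by simp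
      show ?thesis
      proof (rule that[of "\<lambda>G. integral I (\<lambda>s. T 0 s *v G s)"])
        fix G M t assume "continuous_on I G" "\<forall>s\<in>I. nrm (G s) \<le> M" "t \<in> I"
        thus "nrm (Psi T (integral I (\<lambda>s. T 0 s *v G s)) G t) \<le> N * M / lam"
          using Psi_exp(2)[OF tm Ac nrm Np lp HE tau] unfolding I_def by blast
      next
        fix G1 G2 M1 M2
        assume a: "continuous_on I G1" "continuous_on I G2" "\<forall>s\<in>I. nrm (G1 s) \<le> M1" "\<forall>s\<in>I. nrm (G2 s) \<le> M2"
        have i1: "(\<lambda>s. T 0 s *v G1 s) integrable_on I"
          using Psi_exp(1)[OF tm Ac nrm Np lp HE tau] a unfolding I_def by blast
        have i2: "(\<lambda>s. T 0 s *v G2 s) integrable_on I"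
          using Psi_exp(1)[OF tm Ac nrm Np lp HE tau] a unfolding I_def by blast
        have "integral I (\<lambda>s. T 0 s *v (G1 s - G2 s)) = integral I (\<lambda>s. T 0 s *v G1 s - T 0 s *v G2 s)"
          by (simp only: matrix_vector_mult_diff_distrib)
        also have "\<dots> = integral I (\<lambda>s. T 0 s *v G1 s) - integral I (\<lambda>s. T 0 s *v G2 s)"
          by (rule integral_diff[OF i1 i2])
        finally show "integral I (\<lambda>s. T 0 s *v (G1 s - G2 s)) = integral I (\<lambda>s. T 0 s *v G1 s) - integral I (\<lambda>s. T 0 s *v G2 s)" .
      qed
    qed
    define \<Phi> where "\<Phi> z = Psi T (Kf (GG z)) (GG z)" for z
    have PsiD: "(Psi T K G has_vector_derivative (A t *v Psi T K G t + G t)) (at t within I)"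
      if "continuous_on I G" "t \<in> I" for K G t
      using Psi_deriv[OF tm Ac, of \<tau> G t K] that unfolding I_def by blast
    have Psic: "continuous_on I (Psi T K G)" if "continuous_on I G" for K G
      unfolding continuous_on_eq_continuous_within
      using PsiD[OF that] has_vector_derivative_continuous by blast
    obtain z where zc: "continuous_on I z" and zR: "\<forall>t\<in>I. nrm (z t) \<le> R" and zfix: "\<forall>t\<in>I. \<Phi> z t = z t"
    proof -
      have "\<exists>z. continuous_on I z \<and> (\<forall>t\<in>I. nrm (z t) \<le> R) \<and> (\<forall>t\<in>I. \<Phi> z t = z t)"
      proof (rule fixpoint[OF nrm c0 c1 R0])
        fix z assume z: "continuous_on I z" "\<forall>t\<in>I. nrm (z t) \<le> R"
        have bz: "\<forall>s\<in>I. nrm (GG z s) \<le> L * R + \<epsilon>" using GGb[OF z(2)] by blast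
        have "\<forall>t\<in>I. nrm (\<Phi> z t) \<le> N * (L * R + \<epsilon>) / lam"
          unfolding \<Phi>_def using KB[OF GGc[OF z(1)] bz] by blast
        moreover have "continuous_on I (\<Phi> z)" unfolding \<Phi>_def by (rule Psic[OF GGc[OF z(1)]])
        ultimately show "continuous_on I (\<Phi> z) \<and> (\<forall>t\<in>I. nrm (\<Phi> z t) \<le> R)"
          unfolding Rid by blast
      next
        fix z w d assume z: "continuous_on I z" "\<forall>t\<in>I. nrm (z t) \<le> R"
          and w: "continuous_on I w" "\<forall>t\<in>I. nrm (w t) \<le> R" and d: "\<forall>t\<in>I. nrm (z t - w t) \<le> d"
        have bz: "\<forall>s\<in>I. nrm (GG z s) \<le> L * R + \<epsilon>" using GGb[OF z(2)] by blast
        have bw: "\<forall>s\<in>I. nrm (GG w s) \<le> L * R + \<epsilon>" using GGb[OF w(2)] by blast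
        show "\<forall>t\<in>I. nrm (\<Phi> z t - \<Phi> w t) \<le> c * d"
        proof
          fix t assume t: "t \<in> I"
          have t': "t \<in> ival \<tau>" using t unfolding I_def .
          have GGc': "continuous_on (ival \<tau>) (GG z)" "continuous_on (ival \<tau>) (GG w)"
            using GGc[OF z(1)] GGc[OF w(1)] unfolding I_def by auto
          have "\<Phi> z t - \<Phi> w t = Psi T (Kf (GG z) - Kf (GG w)) (\<lambda>s. GG z s - GG w s) t"
            unfolding \<Phi>_def by (rule Psi_diff[OF tm Ac t' GGc'])
          also have "Kf (GG z) - Kf (GG w) = Kf (\<lambda>s. GG z s - GG w s)"
            by (rule KL[OF GGc[OF z(1)] GGc[OF w(1)] bz bw, symmetric])
          finally have eq: "\<Phi> z t - \<Phi> w t = Psi T (Kf (\<lambda>s. GG z s - GG w s)) (\<lambda>s. GG z s - GG w s) t" .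
          have "continuous_on I (\<lambda>s. GG z s - GG w s)" by (intro continuous_intros GGc z(1) w(1))
          moreover have "\<forall>s\<in>I. nrm (GG z s - GG w s) \<le> L * d" using GGd[OF z(2) w(2) d] by blast
          ultimately have "nrm (\<Phi> z t - \<Phi> w t) \<le> N * (L * d) / lam" using eq KB[of "\<lambda>s. GG z s - GG w s" "L * d" t] t by simp
          thus "nrm (\<Phi> z t - \<Phi> w t) \<le> c * d" unfolding c_def by simp
        qed
      qed
      thus ?thesis using that by blast
    qed
    define x where "x t = y t + z t" for t
    show "\<exists>x. is_solution (\<lambda>t x. A t *v x + f t x) \<tau> x \<and> (\<forall>t\<in>ival \<tau>. nrm (x t - y t) \<le> \<kappa> * \<epsilon>)"
    proof (intro exI[of _ x] conjI)
      show "\<forall>t\<in>ival \<tau>. nrm (x t - y t) \<le> \<kappa> * \<epsilon>" using zR unfolding x_def R_def I_def by simp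
      show "is_solution (\<lambda>t x. A t *v x + f t x) \<tau> x"
        unfolding is_solution_def I_def[symmetric]
      proof
        fix t assume t: "t \<in> I"
        have "(\<Phi> z has_vector_derivative (A t *v \<Phi> z t + GG z t)) (at t within I)"
          unfolding \<Phi>_def by (rule PsiD[OF GGc[OF zc] t])
        moreover have "\<Phi> z t = z t" using zfix t by blast
        ultimately have D1: "(\<Phi> z has_vector_derivative (A t *v z t + GG z t)) (at t within I)" by simp
        have "(z has_vector_derivative (A t *v z t + GG z t)) (at t within I)"
        proof (rule has_vector_derivative_transform_within[OF D1 zero_less_one t])
          fix x' assume "x' \<in> I" thus "\<Phi> z x' = z x'" using zfix by blast
        qed
        from has_vector_derivative_add[OF yD[rule_format, OF t] this]
        have "(x has_vector_derivative (y' t + (A t *v z t + GG z t))) (at t within I)"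
          unfolding x_def by simp
        moreover have "y' t + (A t *v z t + GG z t) = A t *v x t + f t (x t)"
          unfolding GG_def h_def x_def by (simp add: matrix_vector_right_distrib)
        ultimately show "(x has_vector_derivative (A t *v x t + f t (x t))) (at t within I)" by simp
      qed
    qed
  qed
qed

end
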